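(* Let $b>1$, let $(p,R,I)$ be proper with $I$ non-empty, and let $k$ be the greatest divisor of $p$ coprime with $b$. If two states $(s,t)$ and $(s',t')$ of $\mathcal{C}_{R,p,I}$ are Nerode-equivalent, then $s\equiv s'\pmod k$.
   Context: $A_b=\{0,\ldots,b-1\}$; for $u=u_\ell\cdots u_0$, $\mathrm{val}(u)=\sum_i u_ib^i$. Given $p\ge1$, $R\subseteq\{0,\ldots,p-1\}$ and a finite set $I\subseteq\mathbb{N}$, the set $S=(R+p\mathbb{N})\oplus I$ ($\oplus$ = symmetric difference). The triple $(p,R,I)$ is proper if $p$ is the smallest positive integer for which there exist $R',I'$ with $R'\subseteq\{0,\ldots,p-1\}$, $I'$ finite and $S=(R'+p\mathbb{N})\oplus I'$. $\mathcal{A}_{R,p}$: states $\{0,\ldots,p-1\}$, initial $0$, final $R$, transitions $n\xrightarrow{a}(nb+a)\bmod p$. With $m=\max I$, $\mathcal{B}_I$: states $\{0,\ldots,m\}\cup\{\bot\}$, initial $0$, final $I$, transitions $i\xrightarrow{a}ib+a$ if $ib+a\le m$, $i\xrightarrow{a}\bot$ otherwise, and $\bot\xrightarrow{a}\bot$. $\mathcal{C}_{R,p,I}$ is the accessible part of the product automaton of $\mathcal{A}_{R,p}$ and $\mathcal{B}_I$: states are pairs $(s,t)$ reachable from $(0,0)$, $(s,t)\xrightarrow{a}(s',t')$ iff $s\xrightarrow{a}s'$ and $t\xrightarrow{a}t'$, and $(s,t)$ is final iff exactly one of $s\in R$, $t\in I$ holds. Two states are Nerode-equivalent if for every word $u$,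 the states reached by reading $u$ from them are both final or both non-final. *)

theory Defs
  imports Main
begin

definition periodic_set :: "nat \<Rightarrow> nat set \<Rightarrow> nat set" where
  "periodic_set p R = {r + p * j | r j. r \<in> R}"

definition symdiff :: "'a set \<Rightarrow> 'a set \<Rightarrow> 'a set" where
  "symdiff A B = (A - B) \<union> (B - A)"

definition S_set :: "nat \<Rightarrow> nat set \<Rightarrow> nat set \<Rightarrow> nat set" where
  "S_set p R I = symdiff (periodic_set p R) I"

definition proper :: "nat \<Rightarrow> nat set \<Rightarrow> nat set \<Rightarrow> bool" where
  "proper p R I \<longleftrightarrow> p \<ge> 1 \<and> R \<subseteq> {0..<p} \<and> finite I \<and>
     (\<forall>q. 0 < q \<and> q < p \<longrightarrow>
        \<not> (\<exists>R' I'. R' \<subseteq> {0..<q} \<and> finite I' \<and> S_set p R I = S_set q R' I'))"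

definition stepA :: "nat \<Rightarrow> nat \<Rightarrow> nat \<Rightarrow> nat \<Rightarrow> nat" where
  "stepA b p n a = (n * b + a) mod p"

text \<open>Automaton B_I with m = Max I; the sink state \<bottom> is represented by None.\<close>
fun stepB :: "nat \<Rightarrow> nat \<Rightarrow> nat option \<Rightarrow> nat \<Rightarrow> nat option" where
  "stepB b m (Some i) a = (if i * b + a \<le> m then Some (i * b + a) else None)"
| "stepB b m None a = None"

text \<open>Product automaton C_{R,p,I}; words are read most significant digit first.\<close>
definition stepC :: "nat \<Rightarrow> nat \<Rightarrow> nat set \<Rightarrow> nat \<times> nat option \<Rightarrow> nat \<Rightarrow> nat \<times> nat option" where
  "stepC b p I q a = (stepA b p (fst q) a, stepB b (Max I) (snd q) a)"

definition runC :: "nat \<Rightarrow> nat \<Rightarrow> nat set \<Rightarrow> nat \<times> nat option \<Rightarrow> nat list \<Rightarrow> nat \<times> nat option" where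
  "runC b p I q w = foldl (stepC b p I) q w"

definition finalC :: "nat set \<Rightarrow> nat set \<Rightarrow> nat \<times> nat option \<Rightarrow> bool" where
  "finalC R I q \<longleftrightarrow> ((fst q \<in> R) \<noteq> (snd q \<in> Some ` I))"

definition stateC :: "nat \<Rightarrow> nat \<Rightarrow> nat set \<Rightarrow> nat \<times> nat option \<Rightarrow> bool" where
  "stateC b p I q \<longleftrightarrow> (\<exists>w \<in> lists {0..<b}. runC b p I (0, Some 0) w = q)"

definition nerode_equiv :: "nat \<Rightarrow> nat \<Rightarrow> nat set \<Rightarrow> nat set \<Rightarrow>
    nat \<times> nat option \<Rightarrow> nat \<times> nat option \<Rightarrow> bool" where
  "nerode_equiv b p R I q q' \<longleftrightarrow>
     (\<forall>u \<in> lists {0..<b}. finalC R I (runC b p I q u) = finalC R I (runC b p I q' u))"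

definition coprime_part :: "nat \<Rightarrow> nat \<Rightarrow> nat" where
  "coprime_part p b = (GREATEST k. k dvd p \<and> coprime k b)"

end

theory Submission
  imports Defs
begin

definition numval :: "nat \<Rightarrow> nat list \<Rightarrow> nat" where
  "numval b u = foldl (\<lambda>x a. x * b + a) 0 u"

lemma numval_snoc: "numval b (u @ [a]) = numval b u * b + a"
  by (simp add: numval_def)

lemma runC_snoc: "runC b p I q (u @ [a]) = stepC b p I (runC b p I q u) a"
  by (simp add: runC_def)

lemma runA: "0 < p \<Longrightarrow> fst (runC b p I q u) mod p = (fst q * b ^ length u + numval b u) mod p"
proof (induction u rule: rev_induct)
  case Nil
  then show ?case by (simp add: runC_def numval_def)
next
  case (snoc a u)
  have "fst (runC b p I q (u @ [a])) mod p = (fst (runC b p I q u) * b + a) mod p"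
    by (simp add: runC_snoc stepC_def stepA_def)
  also have "\<dots> = ((fst (runC b p I q u) mod p) * b + a) mod p"
    by (metis mod_add_left_eq mod_mult_left_eq)
  also have "\<dots> = (((fst q * b ^ length u + numval b u) mod p) * b + a) mod p"
    using snoc by simp
  also have "\<dots> = ((fst q * b ^ length u + numval b u) * b + a) mod p"
    by (metis mod_add_left_eq mod_mult_left_eq)
  also have "\<dots> = (fst q * b ^ length (u @ [a]) + numval b (u @ [a])) mod p"
    by (simp add: numval_snoc algebra_simps)
  finally show ?case .
qed

lemma runA_lt: "0 < p \<Longrightarrow> u \<noteq> [] \<Longrightarrow> fst (runC b p I q u) < p"
  by (cases u rule: rev_exhaust) (auto simp: runC_snoc stepC_def stepA_def)

lemma runB: "snd (runC b p I q u) = Some j \<Longrightarrow> numval b u \<le> j"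
proof (induction u arbitrary: j rule: rev_induct)
  case Nil
  then show ?case by (simp add: numval_def)
next
  case (snoc a u)
  obtain i where i: "snd (runC b p I q u) = Some i"
    using snoc.prems by (cases "snd (runC b p I q u)") (auto simp: runC_snoc stepC_def)
  then have j: "j = i * b + a" using snoc.prems
    by (auto simp: runC_snoc stepC_def split: if_splits)
  have "numval b u \<le> i" using snoc.IH i by blast
  then show ?case using j by (simp add: numval_snoc add_mono mult_right_mono)
qed

fun digs :: "nat \<Rightarrow> nat \<Rightarrow> nat \<Rightarrow> nat list" where
  "digs b 0 v = []"
| "digs b (Suc n) v = digs b n (v div b) @ [v mod b]"

lemma digs_len: "length (digs b n v) = n"
  by (induction n arbitrary: v) auto

lemma digs_lists: "0 < b \<Longrightarrow> digs b n v \<in> lists {0..<b}"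
  by (induction n arbitrary: v) auto

lemma mod2_aux: "(v::nat) mod (b * b^n) = (v div b mod b^n) * b + v mod b"
  using mod_mult2_eq[of v b "b^n"] by (simp add: mult.commute)

lemma digs_val: "numval b (digs b n v) = v mod b ^ n"
proof (induction n arbitrary: v)
  case 0
  then show ?case by (simp add: numval_def)
next
  case (Suc n)
  have "numval b (digs b (Suc n) v) = (v div b mod b^n) * b + v mod b"
    by (simp add: numval_snoc Suc.IH)
  also have "\<dots> = v mod b ^ Suc n" by (simp only: mod2_aux power_Suc)
  finally show ?case .
qed

lemma per_char: "R \<subseteq> {0..<p} \<Longrightarrow> 0 < p \<Longrightarrow> x \<in> periodic_set p R \<longleftrightarrow> x mod p \<in> R"
proof
  assume "R \<subseteq> {0..<p}" "x \<in> periodic_set p R"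
  then show "x mod p \<in> R" by (auto simp: periodic_set_def)
next
  assume "x mod p \<in> R"
  then show "x \<in> periodic_set p R" unfolding periodic_set_def
    by (intro CollectI exI[of _ "x mod p"] exI[of _ "x div p"]) simp
qed

lemma periods_mult:
  fixes Q :: "int \<Rightarrow> bool"
  assumes "\<forall>y. Q (y + t) = Q y"
  shows "Q (y + c * t) = Q y"
proof -
  have nat: "\<forall>y. Q (y + int n * t) = Q y" for n
  proof (induction n)
    case 0 then show ?case by simp
  next
    case (Suc n)
    show ?case
    proof
      fix y
      have "Q (y + int (Suc n) * t) = Q ((y + t) + int n * t)" by (simp add: algebra_simps)
      also have "\<dots> = Q (y + t)" using Suc by blast
      also have "\<dots> = Q y" using assms by blast
      finally show "Q (y + int (Suc n) * t) = Q y" .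
    qed
  qed
  show ?thesis
  proof (cases c rule: int_cases)
    case (nonneg n) then show ?thesis using nat by simp
  next
    case (neg n)
    have "Q (y + c * t + int (Suc n) * t) = Q (y + c * t)" using nat by blast
    moreover have "y + c * t + int (Suc n) * t = y + (c + int (Suc n)) * t" by (simp add: algebra_simps)
    moreover have "c + int (Suc n) = 0" using neg by simp
    ultimately show ?thesis by (metis add.right_neutral mult_zero_left)
  qed
qed

lemma coprime_part_props:
  assumes "0 < p"
  shows "coprime_part p b dvd p \<and> coprime (coprime_part p b) b"
  unfolding coprime_part_def
  by (rule GreatestI_nat[where k=1 and b=p]) (use assms in \<open>auto intro: dvd_imp_le\<close>)


theorem proposition40:
  fixes b p :: nat and R I :: "nat set" and s s' :: nat and t t' :: "nat option"
  assumes "b > 1"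
    and "proper p R I"
    and "I \<noteq> {}"
    and "stateC b p I (s, t)"
    and "stateC b p I (s', t')"
    and "nerode_equiv b p R I (s, t) (s', t')"
  shows "s mod coprime_part p b = s' mod coprime_part p b"
proof -
  have p0: "0 < p" and Rsub: "R \<subseteq> {0..<p}" and finI: "finite I"
    and minimal: "\<And>q. 0 < q \<Longrightarrow> q < p \<Longrightarrow>
        \<not> (\<exists>R' I'. R' \<subseteq> {0..<q} \<and> finite I' \<and> S_set p R I = S_set q R' I')"
    using assms(2) unfolding proper_def by auto
  define M where "M = Max I + 1"
  have MI: "\<And>j. j \<in> I \<Longrightarrow> j < M" using finI by (simp add: M_def le_imp_less_Suc)
  define n where "n = M + p"
  have "n < 2 ^ n" by simp
  also have "(2::nat) ^ n \<le> b ^ n" using assms(1) by (simp add: power_mono)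
  finally have bn: "M + p < b ^ n" by (simp add: n_def)
  define P where "P = (\<lambda>x. x mod p \<in> R)"
  define A where "A = s * b ^ n"
  define B where "B = s' * b ^ n"
  have final_iff: "finalC R I (runC b p I (x, y) (digs b n v)) \<longleftrightarrow> P (x * b ^ n + v)"
    if "M \<le> v" "v < b ^ n" for x y v
  proof -
    let ?u = "digs b n v"
    have nv: "numval b ?u = v" using that by (simp add: digs_val)
    have ne: "?u \<noteq> []" using digs_len[of b n v] n_def p0 by auto
    have lt: "fst (runC b p I (x, y) ?u) < p" using runA_lt[OF p0 ne] by blast
    have "fst (runC b p I (x, y) ?u) = (x * b ^ n + v) mod p"
      using runA[OF p0, of b I "(x,y)" ?u] lt nv by (simp add: digs_len)
    moreover have "snd (runC b p I (x, y) ?u) \<notin> Some ` I"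
    proof
      assume "snd (runC b p I (x, y) ?u) \<in> Some ` I"
      then obtain j where j: "j \<in> I" "snd (runC b p I (x, y) ?u) = Some j" by auto
      have "v \<le> j" using runB[OF j(2)] nv by simp
      with MI[OF j(1)] that show False by simp
    qed
    ultimately show ?thesis by (simp add: finalC_def P_def)
  qed
  have key: "P (A + v) = P (B + v)" if "M \<le> v" "v < b ^ n" for v
  proof -
    have "digs b n v \<in> lists {0..<b}" using assms(1) by (simp add: digs_lists)
    then have "finalC R I (runC b p I (s, t) (digs b n v)) = finalC R I (runC b p I (s', t') (digs b n v))"
      using assms(6) unfolding nerode_equiv_def by blast
    then show ?thesis using final_iff[OF that] by (simp add: A_def B_def)
  qed
  have Pmod: "P x = P y" if "x mod p = y mod p" for x y using that by (simp add: P_def)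
  have allx: "P (A + x) = P (B + x)" for x
  proof -
    define y where "y = x + p * M"
    have "M \<le> p * M" using p0 by simp
    then have yM: "M \<le> y" unfolding y_def by linarith
    define v where "v = M + (y - M) mod p"
    have "(y - M) mod p < p" using p0 by simp
    then have vM: "M \<le> v" "v < b ^ n" using bn unfolding v_def by linarith+
    have yv: "y = v + p * ((y - M) div p)" using yM by (simp add: v_def)
    have "P (A + x) = P (A + y)" by (rule Pmod) (simp add: y_def flip: add.assoc)
    also have "\<dots> = P (A + v)" by (rule Pmod) (subst yv, simp add: add.assoc[symmetric])
    also have "\<dots> = P (B + v)" by (rule key[OF vM])
    also have "\<dots> = P (B + y)" by (rule Pmod) (subst yv, simp add: add.assoc[symmetric])
    also have "\<dots> = P (B + x)" by (rule Pmod) (simp add: y_def flip: add.assoc)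
    finally show ?thesis .
  qed
  define Q where "Q = (\<lambda>y::int. nat (y mod int p) \<in> R)"
  have QP: "Q (int z) = P z" for z by (simp add: Q_def P_def flip: of_nat_mod)
  have Qmod: "Q x = Q y" if "x mod int p = y mod int p" for x y using that by (simp add: Q_def)
  define \<delta> where "\<delta> = int A - int B"
  have Qd: "\<forall>y. Q (y + \<delta>) = Q y"
  proof
    fix y
    define x where "x = nat ((y - int B) mod int p)"
    have ix: "int x = (y - int B) mod int p" using p0 by (simp add: x_def)
    have "Q (y + \<delta>) = Q (int (A + x))"
      by (rule Qmod) (simp add: ix \<delta>_def mod_add_right_eq algebra_simps)
    also have "\<dots> = Q (int (B + x))" by (simp only: QP allx)
    also have "\<dots> = Q y"
      by (rule Qmod) (simp add: ix mod_add_right_eq algebra_simps)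
    finally show "Q (y + \<delta>) = Q y" .
  qed
  have Qp: "\<forall>y. Q (y + int p) = Q y" by (simp add: Q_def)
  define g where "g = gcd \<delta> (int p)"
  have Qg: "\<forall>y. Q (y + g) = Q y"
  proof
    fix y
    obtain u v where uv: "u * \<delta> + v * int p = g" using bezout_int g_def by blast
    have "Q (y + g) = Q ((y + u * \<delta>) + v * int p)" by (simp add: uv[symmetric] add.assoc)
    also have "\<dots> = Q (y + u * \<delta>)" by (rule periods_mult[OF Qp])
    also have "\<dots> = Q y" by (rule periods_mult[OF Qd])
    finally show "Q (y + g) = Q y" .
  qed
  have g0: "0 < g" using p0 by (simp add: g_def)
  have gdvd: "g dvd int p" by (simp add: g_def)
  have gp: "g = int p"
  proof (rule ccontr)
    assume "g \<noteq> int p"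
    then have glt: "g < int p" using gdvd p0 zdvd_imp_le by fastforce
    define q where "q = nat g"
    have q0: "0 < q" "q < p" using g0 glt by (auto simp: q_def)
    have gq: "g = int q" using g0 by (simp add: q_def)
    define R' where "R' = {r \<in> R. r < q}"
    have R'sub: "R' \<subseteq> {0..<q}" by (auto simp: R'_def)
    have "x mod p \<in> R \<longleftrightarrow> x mod q \<in> R'" for x
    proof -
      have "int x = int (x mod q) + int (x div q) * g"
        using mod_div_mult_eq[of x q] gq by (metis of_nat_add of_nat_mult)
      then have "Q (int x) = Q (int (x mod q))" using periods_mult[OF Qg] by metis
      then have "P x = P (x mod q)" by (simp add: QP)
      moreover have "(x mod q) mod p = x mod q" proof -
        have "x mod q < q" using q0 by simp
        then show ?thesis using q0(2) by (meson less_trans mod_less)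
      qed
      ultimately show ?thesis using q0 by (simp add: P_def R'_def)
    qed
    then have "periodic_set p R = periodic_set q R'"
      using per_char[OF Rsub p0] per_char[OF R'sub q0(1)] by blast
    then have "S_set p R I = S_set q R' I" by (simp add: S_set_def)
    then show False using minimal[OF q0] R'sub finI by blast
  qed
  have pd: "int p dvd (int s - int s') * int b ^ n"
  proof -
    have "\<delta> = (int s - int s') * int b ^ n" by (simp add: \<delta>_def A_def B_def algebra_simps)
    moreover have "g dvd \<delta>" by (simp add: g_def)
    ultimately show ?thesis using gp by simp
  qed
  define k where "k = coprime_part p b"
  have kp: "k dvd p" "coprime k b" using coprime_part_props[OF p0] by (auto simp: k_def)
  have cop: "coprime (int k) (int b ^ n)" using kp(2) by simp
  have kpi: "int k dvd int p" using kp(1) by (simp only: int_dvd_int_iff)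
  have dm: "int k dvd (int s - int s') * int b ^ n" by (rule dvd_trans[OF kpi pd])
  have "int k dvd int s - int s'" by (rule iffD1[OF coprime_dvd_mult_left_iff[OF cop] dm])
  then have "int s mod int k = int s' mod int k" by (simp add: mod_eq_dvd_iff)
  then have "int (s mod k) = int (s' mod k)" by (simp only: of_nat_mod)
  then have "s mod k = s' mod k" by (simp only: of_nat_eq_iff)
  then show ?thesis unfolding k_def .
qed

end
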